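(* Let $A$ be a Noetherian skew brace (every ascending chain of ideals of $A$ is eventually stationary). Then the set of minimal prime ideals of $A$ is finite.
   Context: A (left) skew brace is a triple $(A,+,\circ)$ where $(A,+)$ and $(A,\circ)$ are groups such that $a\circ(b+c)=a\circ b-a+a\circ c$ for all $a,b,c$; common identity $e$. Put $\lambda_a(b)=-a+a\circ b$, $a*b=-a+a\circ b-b$. An ideal is a normal subgroup $I$ of both $(A,+)$ and $(A,\circ)$ with $\lambda_a(I)\subseteq I$ for all $a$. For subsets $I,J$, $I*J=\{i*j\mid i\in I,j\in J\}$. A prime ideal is a proper ideal $P$ such that for any subsets $I,J$ of $A$, $I*J\subseteq P$ implies $I\subseteq P$ or $J\subseteq P$. A minimal prime ideal is a prime ideal containing no strictly smaller prime ideal. *)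

theory Defs
  imports "HOL-Algebra.Coset"
begin

text \<open>A skew brace on the carrier A with addition p, multiplication c (the circle operation)
  and common identity e.\<close>

definition grp :: "'a set \<Rightarrow> ('a \<Rightarrow> 'a \<Rightarrow> 'a) \<Rightarrow> 'a \<Rightarrow> 'a monoid" where
  "grp A f e = \<lparr>carrier = A, mult = f, one = e\<rparr>"

definition bneg :: "'a set \<Rightarrow> ('a \<Rightarrow> 'a \<Rightarrow> 'a) \<Rightarrow> 'a \<Rightarrow> 'a \<Rightarrow> 'a" where
  "bneg A p e a = inv\<^bsub>grp A p e\<^esub> a"

definition skew_brace :: "'a set \<Rightarrow> ('a \<Rightarrow> 'a \<Rightarrow> 'a) \<Rightarrow> ('a \<Rightarrow> 'a \<Rightarrow> 'a) \<Rightarrow> 'a \<Rightarrow> bool" where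
  "skew_brace A p c e \<longleftrightarrow> group (grp A p e) \<and> group (grp A c e) \<and>
     (\<forall>a\<in>A. \<forall>b\<in>A. \<forall>d\<in>A. c a (p b d) = p (p (c a b) (bneg A p e a)) (c a d))"

definition blambda :: "'a set \<Rightarrow> ('a \<Rightarrow> 'a \<Rightarrow> 'a) \<Rightarrow> ('a \<Rightarrow> 'a \<Rightarrow> 'a) \<Rightarrow> 'a \<Rightarrow> 'a \<Rightarrow> 'a \<Rightarrow> 'a" where
  "blambda A p c e a b = p (bneg A p e a) (c a b)"

definition bstar :: "'a set \<Rightarrow> ('a \<Rightarrow> 'a \<Rightarrow> 'a) \<Rightarrow> ('a \<Rightarrow> 'a \<Rightarrow> 'a) \<Rightarrow> 'a \<Rightarrow> 'a \<Rightarrow> 'a \<Rightarrow> 'a" where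
  "bstar A p c e a b = p (p (bneg A p e a) (c a b)) (bneg A p e b)"

definition bstar_set :: "'a set \<Rightarrow> ('a \<Rightarrow> 'a \<Rightarrow> 'a) \<Rightarrow> ('a \<Rightarrow> 'a \<Rightarrow> 'a) \<Rightarrow> 'a \<Rightarrow> 'a set \<Rightarrow> 'a set \<Rightarrow> 'a set" where
  "bstar_set A p c e I J = {bstar A p c e i j | i j. i \<in> I \<and> j \<in> J}"

definition brace_ideal :: "'a set \<Rightarrow> ('a \<Rightarrow> 'a \<Rightarrow> 'a) \<Rightarrow> ('a \<Rightarrow> 'a \<Rightarrow> 'a) \<Rightarrow> 'a \<Rightarrow> 'a set \<Rightarrow> bool" where
  "brace_ideal A p c e I \<longleftrightarrow> normal I (grp A p e) \<and> normal I (grp A c e) \<and>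
     (\<forall>a\<in>A. blambda A p c e a ` I \<subseteq> I)"

definition prime_ideal :: "'a set \<Rightarrow> ('a \<Rightarrow> 'a \<Rightarrow> 'a) \<Rightarrow> ('a \<Rightarrow> 'a \<Rightarrow> 'a) \<Rightarrow> 'a \<Rightarrow> 'a set \<Rightarrow> bool" where
  "prime_ideal A p c e P \<longleftrightarrow> brace_ideal A p c e P \<and> P \<noteq> A \<and>
     (\<forall>I J. I \<subseteq> A \<longrightarrow> J \<subseteq> A \<longrightarrow> bstar_set A p c e I J \<subseteq> P \<longrightarrow> I \<subseteq> P \<or> J \<subseteq> P)"

definition minimal_prime_ideal :: "'a set \<Rightarrow> ('a \<Rightarrow> 'a \<Rightarrow> 'a) \<Rightarrow> ('a \<Rightarrow> 'a \<Rightarrow> 'a) \<Rightarrow> 'a \<Rightarrow> 'a set \<Rightarrow> bool" where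
  "minimal_prime_ideal A p c e P \<longleftrightarrow> prime_ideal A p c e P \<and>
     \<not> (\<exists>Q. prime_ideal A p c e Q \<and> Q \<subset> P)"

definition noetherian_brace :: "'a set \<Rightarrow> ('a \<Rightarrow> 'a \<Rightarrow> 'a) \<Rightarrow> ('a \<Rightarrow> 'a \<Rightarrow> 'a) \<Rightarrow> 'a \<Rightarrow> bool" where
  "noetherian_brace A p c e \<longleftrightarrow>
     (\<forall>f :: nat \<Rightarrow> 'a set. (\<forall>n. brace_ideal A p c e (f n)) \<and> (\<forall>n. f n \<subseteq> f (Suc n))
        \<longrightarrow> (\<exists>N. \<forall>n\<ge>N. f n = f N))"

end

theory Submission
  imports Defs
begin

lemma normal_Inter_fam:
  assumes GG: "group GG" and S: "S \<noteq> {}" and N: "\<And>H. H \<in> S \<Longrightarrow> normal H GG"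
  shows "normal (\<Inter>S) GG"
proof -
  interpret group GG by (rule GG)
  have "subgroup (\<Inter>S) GG"
    by (rule subgroups_Inter) (use S N normal_imp_subgroup in auto)
  moreover have "\<forall>x \<in> carrier GG. \<forall>h \<in> \<Inter>S. x \<otimes>\<^bsub>GG\<^esub> h \<otimes>\<^bsub>GG\<^esub> inv\<^bsub>GG\<^esub> x \<in> \<Inter>S"
    using N normal_inv_iff by blast
  ultimately show ?thesis using normal_inv_iff by blast
qed

lemma normal_carrier_self:
  assumes GG: "group GG" shows "normal (carrier GG) GG"
proof -
  interpret group GG by (rule GG)
  show ?thesis using normal_inv_iff subgroup_self by blast
qed

lemma ideal_sub:
  assumes "brace_ideal A p c e I" shows "I \<subseteq> A"
proof -
  have "subgroup I (grp A p e)" using assms normal_imp_subgroup unfolding brace_ideal_def by blast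
  then show ?thesis using subgroup.subset by (fastforce simp: grp_def)
qed

lemma ideal_A:
  assumes "skew_brace A p c e" shows "brace_ideal A p c e A"
proof -
  have g1: "group (grp A p e)" and g2: "group (grp A c e)" using assms unfolding skew_brace_def by auto
  have "normal A (grp A p e)" using normal_carrier_self[OF g1] by (simp add: grp_def)
  moreover have "normal A (grp A c e)" using normal_carrier_self[OF g2] by (simp add: grp_def)
  moreover have "\<forall>a\<in>A. blambda A p c e a ` A \<subseteq> A"
  proof (intro ballI subsetI)
    fix a x assume a: "a \<in> A" and "x \<in> blambda A p c e a ` A"
    then obtain b where b: "b \<in> A" and x: "x = blambda A p c e a b" by auto
    interpret P: group "grp A p e" by (rule g1)
    interpret C: group "grp A c e" by (rule g2)
    have "bneg A p e a \<in> A" using a P.inv_closed[of a] by (simp add: bneg_def grp_def)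
    moreover have "c a b \<in> A" using a b C.m_closed[of a b] by (simp add: grp_def)
    ultimately show "x \<in> A" using x P.m_closed by (simp add: blambda_def grp_def)
  qed
  ultimately show ?thesis unfolding brace_ideal_def by blast
qed

definition gen :: "'a set \<Rightarrow> ('a \<Rightarrow> 'a \<Rightarrow> 'a) \<Rightarrow> ('a \<Rightarrow> 'a \<Rightarrow> 'a) \<Rightarrow> 'a \<Rightarrow> 'a set \<Rightarrow> 'a set" where
  "gen A p c e X = \<Inter>{J. brace_ideal A p c e J \<and> X \<subseteq> J}"

lemma gen_ideal:
  assumes sb: "skew_brace A p c e" and X: "X \<subseteq> A"
  shows "brace_ideal A p c e (gen A p c e X)" "X \<subseteq> gen A p c e X"
    "\<And>J. brace_ideal A p c e J \<Longrightarrow> X \<subseteq> J \<Longrightarrow> gen A p c e X \<subseteq> J"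
proof -
  let ?S = "{J. brace_ideal A p c e J \<and> X \<subseteq> J}"
  have g1: "group (grp A p e)" and g2: "group (grp A c e)" using sb unfolding skew_brace_def by auto
  have ne: "?S \<noteq> {}" using ideal_A[OF sb] X by blast
  have "normal (\<Inter>?S) (grp A p e)"
    by (rule normal_Inter_fam[OF g1 ne]) (simp add: brace_ideal_def)
  moreover have "normal (\<Inter>?S) (grp A c e)"
    by (rule normal_Inter_fam[OF g2 ne]) (simp add: brace_ideal_def)
  moreover have "\<forall>a\<in>A. blambda A p c e a ` (\<Inter>?S) \<subseteq> \<Inter>?S"
  proof (intro ballI subsetI)
    fix a y assume a: "a \<in> A" and y: "y \<in> blambda A p c e a ` (\<Inter>?S)"
    then obtain x where x: "x \<in> \<Inter>?S" and yx: "y = blambda A p c e a x" by blast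
    show "y \<in> \<Inter>?S"
    proof
      fix J assume J: "J \<in> ?S"
      then have "x \<in> J" using x by blast
      moreover have "blambda A p c e a ` J \<subseteq> J" using J a unfolding brace_ideal_def by simp
      ultimately show "y \<in> J" using yx by blast
    qed
  qed
  ultimately show "brace_ideal A p c e (gen A p c e X)" unfolding brace_ideal_def gen_def by blast
  show "X \<subseteq> gen A p c e X" unfolding gen_def by blast
  show "\<And>J. brace_ideal A p c e J \<Longrightarrow> X \<subseteq> J \<Longrightarrow> gen A p c e X \<subseteq> J" unfolding gen_def by blast
qed

lemma wf_ideals:
  assumes nb: "noetherian_brace A p c e"
  shows "wf {(J, I). brace_ideal A p c e I \<and> brace_ideal A p c e J \<and> I \<subset> J}"
    (is "wf ?R")
proof (rule ccontr)
  assume nw: "\<not> wf ?R"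
  have "\<exists>f. \<forall>i. (f (Suc i), f i) \<in> ?R"
    using nw unfolding wf_iff_no_infinite_down_chain by (rule notnotD)
  then obtain f where f: "\<And>i. (f (Suc i), f i) \<in> ?R" by blast
  have fi: "\<And>i. brace_ideal A p c e (f i) \<and> f i \<subset> f (Suc i)"
  proof -
    fix i have "(f (Suc i), f i) \<in> ?R" by (rule f)
    then show "brace_ideal A p c e (f i) \<and> f i \<subset> f (Suc i)" by (simp only: mem_Collect_eq case_prod_conv)
  qed
  have "(\<forall>n. brace_ideal A p c e (f n)) \<and> (\<forall>n. f n \<subseteq> f (Suc n))"
    using fi by (simp add: less_imp_le)
  then have "\<exists>N. \<forall>n\<ge>N. f n = f N" by (rule nb[unfolded noetherian_brace_def, rule_format, of f])
  then obtain N where N: "\<forall>n\<ge>N. f n = f N" by (elim exE)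
  have "Suc N \<ge> N" by simp
  then have "f (Suc N) = f N" using N by blast
  moreover have "f N \<subset> f (Suc N)" using fi by simp
  ultimately show False by simp
qed

lemma main_claim:
  assumes sb: "skew_brace A p c e" and nb: "noetherian_brace A p c e"
  shows "brace_ideal A p c e I \<Longrightarrow> \<exists>F. finite F \<and> (\<forall>Q\<in>F. prime_ideal A p c e Q) \<and>
           (\<forall>P. prime_ideal A p c e P \<and> I \<subseteq> P \<longrightarrow> (\<exists>Q\<in>F. Q \<subseteq> P))"
proof (induction I rule: wf_induct_rule[OF wf_ideals[OF nb]])
  case (1 I)
  note IH = "1.IH" and II = "1.prems"
  show ?case
  proof (cases "prime_ideal A p c e I")
    case True
    then show ?thesis by (intro exI[of _ "{I}"]) auto
  next
    case np: False
    show ?thesis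
    proof (cases "I = A")
      case True
      have "\<not> (prime_ideal A p c e P \<and> I \<subseteq> P)" for P
      proof
        assume H: "prime_ideal A p c e P \<and> I \<subseteq> P"
        then have "brace_ideal A p c e P" "P \<noteq> A" unfolding prime_ideal_def by simp_all
        moreover have "P \<subseteq> A" by (rule ideal_sub) (rule calculation(1))
        ultimately show False using H True by blast
      qed
      then show ?thesis by (intro exI[of _ "{}"]) auto
    next
      case False
      have "\<not> (\<forall>X Y. X \<subseteq> A \<longrightarrow> Y \<subseteq> A \<longrightarrow> bstar_set A p c e X Y \<subseteq> I \<longrightarrow> X \<subseteq> I \<or> Y \<subseteq> I)"
        using np II False unfolding prime_ideal_def by simp
      then obtain X Y where XA: "X \<subseteq> A" and YA: "Y \<subseteq> A" and XY: "bstar_set A p c e X Y \<subseteq> I"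
        and nX: "\<not> X \<subseteq> I" and nY: "\<not> Y \<subseteq> I"
        by blast
      have IA: "I \<subseteq> A" using ideal_sub[OF II] .
      define J1 where "J1 = gen A p c e (I \<union> X)"
      define J2 where "J2 = gen A p c e (I \<union> Y)"
      have J1: "brace_ideal A p c e J1" "I \<union> X \<subseteq> J1"
        "\<And>J. brace_ideal A p c e J \<Longrightarrow> I \<union> X \<subseteq> J \<Longrightarrow> J1 \<subseteq> J"
        using gen_ideal[OF sb, of "I \<union> X"] IA XA unfolding J1_def by auto
      have J2: "brace_ideal A p c e J2" "I \<union> Y \<subseteq> J2"
        "\<And>J. brace_ideal A p c e J \<Longrightarrow> I \<union> Y \<subseteq> J \<Longrightarrow> J2 \<subseteq> J"
        using gen_ideal[OF sb, of "I \<union> Y"] IA YA unfolding J2_def by auto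
      have "I \<subset> J1" using J1(2) nX by blast
      then obtain F1 where F1: "finite F1" "\<forall>Q\<in>F1. prime_ideal A p c e Q"
        "\<forall>P. prime_ideal A p c e P \<and> J1 \<subseteq> P \<longrightarrow> (\<exists>Q\<in>F1. Q \<subseteq> P)"
        using IH[of J1] II J1(1) by blast
      have "I \<subset> J2" using J2(2) nY by blast
      then obtain F2 where F2: "finite F2" "\<forall>Q\<in>F2. prime_ideal A p c e Q"
        "\<forall>P. prime_ideal A p c e P \<and> J2 \<subseteq> P \<longrightarrow> (\<exists>Q\<in>F2. Q \<subseteq> P)"
        using IH[of J2] II J2(1) by blast
      show ?thesis
      proof (intro exI[of _ "F1 \<union> F2"] conjI allI impI)
        show "finite (F1 \<union> F2)" using F1 F2 by simp
        show "\<forall>Q\<in>F1 \<union> F2. prime_ideal A p c e Q" using F1 F2 by blast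
        fix P assume P: "prime_ideal A p c e P \<and> I \<subseteq> P"
        then have "\<forall>X Y. X \<subseteq> A \<longrightarrow> Y \<subseteq> A \<longrightarrow> bstar_set A p c e X Y \<subseteq> P \<longrightarrow> X \<subseteq> P \<or> Y \<subseteq> P"
          unfolding prime_ideal_def by simp
        moreover have "bstar_set A p c e X Y \<subseteq> P" using XY P by blast
        ultimately have "X \<subseteq> P \<or> Y \<subseteq> P" using XA YA by blast
        moreover have PI: "brace_ideal A p c e P" using P unfolding prime_ideal_def by blast
        ultimately have "J1 \<subseteq> P \<or> J2 \<subseteq> P" using J1(3) J2(3) P by blast
        then show "\<exists>Q\<in>F1 \<union> F2. Q \<subseteq> P"
        proof
          assume "J1 \<subseteq> P"
          then obtain Q where "Q \<in> F1" "Q \<subseteq> P" using F1(3) P by blast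
          then show ?thesis by blast
        next
          assume "J2 \<subseteq> P"
          then obtain Q where "Q \<in> F2" "Q \<subseteq> P" using F2(3) P by blast
          then show ?thesis by blast
        qed
      qed
    qed
  qed
qed

theorem corollary4p21:
  fixes A :: "'a set" and p c :: "'a \<Rightarrow> 'a \<Rightarrow> 'a" and e :: 'a
  assumes "skew_brace A p c e"
    and "noetherian_brace A p c e"
  shows "finite {P. minimal_prime_ideal A p c e P}"
proof -
  have g: "brace_ideal A p c e (gen A p c e {})" "\<And>J. brace_ideal A p c e J \<Longrightarrow> gen A p c e {} \<subseteq> J"
    using gen_ideal[OF assms(1), of "{}"] by auto
  obtain F where F: "finite F" "\<forall>Q\<in>F. prime_ideal A p c e Q"
    "\<forall>P. prime_ideal A p c e P \<and> gen A p c e {} \<subseteq> P \<longrightarrow> (\<exists>Q\<in>F. Q \<subseteq> P)"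
    using main_claim[OF assms g(1)] by blast
  have "{P. minimal_prime_ideal A p c e P} \<subseteq> F"
  proof
    fix P assume "P \<in> {P. minimal_prime_ideal A p c e P}"
    then have m: "minimal_prime_ideal A p c e P" by simp
    then have pp: "prime_ideal A p c e P" unfolding minimal_prime_ideal_def by blast
    then have "gen A p c e {} \<subseteq> P" using g(2) unfolding prime_ideal_def by blast
    then obtain Q where "Q \<in> F" "Q \<subseteq> P" using F(3) pp by blast
    moreover have "\<not> Q \<subset> P" using m F(2) \<open>Q \<in> F\<close> unfolding minimal_prime_ideal_def by blast
    ultimately show "P \<in> F" by (metis psubsetI)
  qed
  then show ?thesis using F(1) finite_subset by blast
qed

end
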